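(* Consider an equation system $X=_\mu F$ where $F$ is a quantitative formula possibly containing $\min$. Suppose there are $u\in\mathbb{E}(D)$ with $[\![F^{\max}]\!](u)\le u$, a function $r\colon D\to[0,\infty)$ with $[\![\mathsf{D}(F^{\max})]\!](r)+u\le r$, and $\eta\in\mathbb{E}(D)$ with $\eta\le u$ and $[\![F]\!](\eta)\ge\eta$. Then $\eta$ is a lower bound of the least fixed point of $[\![F]\!]$, i.e. $\eta\le\mu[\![F]\!]$.
   Context: $\mathbb{E}(D)$ is the set of functions $D\to[0,\infty]$ with pointwise order and operations ($\infty+x=\infty$, $0\cdot\infty=0$, $r\cdot\infty=\infty$ for $r>0$). Quantitative formulas over a predicate variable $X$ (of type $D\to\Omega$) with minimum are: $F ::= X(\tilde e)\mid t\mid F_1+F_2\mid t\cdot F\mid \mathbf{if}\ \varphi\ \mathbf{then}\ F_1\ \mathbf{else}\ F_2\mid\min\{F_1,\dots,F_n\}$, with $\tilde e$ expressions, $t$ a $[0,\infty)$-valued term, $\varphi$ boolean; interpreted as maps $\mathbb{E}(D)\to\mathbb{E}(D)$ by $[\![X(e)]\!](\eta)(v)=\eta([\![e]\!](v))$, $[\![t]\!](\eta)(v)=[\![t]\!](v)$, pointwise sum and scalar product, case distinction for conditionals, and pointwise minimum for $\min$. $F^{\max}$ is obtained from $F$ by replacing every $\min$ by $\max$ (interpreted as pointwise maximum). $\mathsf{D}F$ is defined syntactically: $\mathsf{D}(X(\tilde e))=X(\tilde e)$, $\mathsf{D}t=0$, $\mathsf{D}(F_1+F_2)=\mathsf{D}F_1+\mathsf{D}F_2$,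 $\mathsf{D}(t\cdot F)=t\cdot\mathsf{D}F$, $\mathsf{D}(\mathbf{if}\ \varphi\ \mathbf{then}\ F_1\ \mathbf{else}\ F_2)=\mathbf{if}\ \varphi\ \mathbf{then}\ \mathsf{D}F_1\ \mathbf{else}\ \mathsf{D}F_2$, $\mathsf{D}(\min\{F_1,\dots,F_n\})=\min\{\mathsf{D}F_1,\dots,\mathsf{D}F_n\}$ (and likewise for $\max$). *)

theory Defs
  imports "HOL-Library.Extended_Nonnegative_Real" "HOL-Library.Function_Algebras"
begin

text \<open>Expressions e are given semantically as maps D -> D (D may be a tuple type),
  terms t as maps D -> ennreal (required to be finite by qwf), guards as
  predicates on D.\<close>

datatype 'd qform =
    QVar "'d \<Rightarrow> 'd"
  | QConst "'d \<Rightarrow> ennreal"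
  | QPlus "'d qform" "'d qform"
  | QScale "'d \<Rightarrow> ennreal" "'d qform"
  | QIte "'d \<Rightarrow> bool" "'d qform" "'d qform"
  | QMin "'d qform list"
  | QMax "'d qform list"

primrec qwf :: "'d qform \<Rightarrow> bool" where
  "qwf (QVar e) = True"
| "qwf (QConst t) = (\<forall>v. t v < \<infinity>)"
| "qwf (QPlus F G) = (qwf F \<and> qwf G)"
| "qwf (QScale t F) = ((\<forall>v. t v < \<infinity>) \<and> qwf F)"
| "qwf (QIte b F G) = (qwf F \<and> qwf G)"
| "qwf (QMin Fs) = (Fs \<noteq> [] \<and> list_all id (map qwf Fs))"
| "qwf (QMax Fs) = (Fs \<noteq> [] \<and> list_all id (map qwf Fs))"

primrec qsem :: "'d qform \<Rightarrow> ('d \<Rightarrow> ennreal) \<Rightarrow> 'd \<Rightarrow> ennreal" where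
  "qsem (QVar e) = (\<lambda>\<eta> v. \<eta> (e v))"
| "qsem (QConst t) = (\<lambda>\<eta> v. t v)"
| "qsem (QPlus F G) = (\<lambda>\<eta> v. qsem F \<eta> v + qsem G \<eta> v)"
| "qsem (QScale t F) = (\<lambda>\<eta> v. t v * qsem F \<eta> v)"
| "qsem (QIte b F G) = (\<lambda>\<eta> v. if b v then qsem F \<eta> v else qsem G \<eta> v)"
| "qsem (QMin Fs) = (\<lambda>\<eta> v. Min (set (map (\<lambda>f. f \<eta> v) (map qsem Fs))))"
| "qsem (QMax Fs) = (\<lambda>\<eta> v. Max (set (map (\<lambda>f. f \<eta> v) (map qsem Fs))))"

primrec qmaxify :: "'d qform \<Rightarrow> 'd qform" where
  "qmaxify (QVar e) = QVar e"
| "qmaxify (QConst t) = QConst t"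
| "qmaxify (QPlus F G) = QPlus (qmaxify F) (qmaxify G)"
| "qmaxify (QScale t F) = QScale t (qmaxify F)"
| "qmaxify (QIte b F G) = QIte b (qmaxify F) (qmaxify G)"
| "qmaxify (QMin Fs) = QMax (map qmaxify Fs)"
| "qmaxify (QMax Fs) = QMax (map qmaxify Fs)"

primrec qD :: "'d qform \<Rightarrow> 'd qform" where
  "qD (QVar e) = QVar e"
| "qD (QConst t) = QConst (\<lambda>_. 0)"
| "qD (QPlus F G) = QPlus (qD F) (qD G)"
| "qD (QScale t F) = QScale t (qD F)"
| "qD (QIte b F G) = QIte b (qD F) (qD G)"
| "qD (QMin Fs) = QMin (map qD Fs)"
| "qD (QMax Fs) = QMax (map qD Fs)"

end

theory Submission
  imports Defs
begin

lemma qsem_QMin': "qsem (QMin Fs) \<eta> v = Min ((\<lambda>F. qsem F \<eta> v) ` set Fs)"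
  by (simp add: image_image)
lemma qsem_QMax': "qsem (QMax Fs) \<eta> v = Max ((\<lambda>F. qsem F \<eta> v) ` set Fs)"
  by (simp add: image_image)

declare qsem.simps(6,7)[simp del]
declare qsem_QMin'[simp] qsem_QMax'[simp]

lemma qwf_qmaxify: "qwf F \<Longrightarrow> qwf (qmaxify F)"
  by (induction F) (auto simp: list_all_iff)

lemma qwf_qD: "qwf F \<Longrightarrow> qwf (qD F)"
  by (induction F) (auto simp: list_all_iff)

lemma qsem_mono: "a \<le> b \<Longrightarrow> qsem F a v \<le> qsem F b v"
proof (induction F arbitrary: v)
  case (QVar x) then show ?case by (simp add: le_fun_def)
next
  case (QScale t F) then show ?case by (simp add: mult_left_mono)
next
  case (QPlus F G) then show ?case by (simp add: add_mono)
next
  case (QMin Fs)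
  show ?case
  proof (cases "Fs = []")
    case False
    then show ?thesis using QMin
      by (auto intro!: Min.boundedI) (meson Min_le dual_order.trans finite_imageI finite_set imageI)
  qed simp
next
  case (QMax Fs)
  show ?case
  proof (cases "Fs = []")
    case False
    then show ?thesis using QMax
      by (auto intro!: Max.boundedI) (meson Max_ge dual_order.trans finite_imageI finite_set imageI)
  qed simp
qed auto

lemma qsem_le_max: "qwf F \<Longrightarrow> qsem F a v \<le> qsem (qmaxify F) a v"
proof (induction F arbitrary: v)
  case (QScale t F) then show ?case by (simp add: mult_left_mono)
next
  case (QPlus F G) then show ?case by (simp add: add_mono)
next
  case (QMin Fs)
  then obtain F0 where F0: "F0 \<in> set Fs" by (cases Fs) auto
  have "Min ((\<lambda>F. qsem F a v) ` set Fs) \<le> qsem F0 a v" using F0 by simp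
  also have "\<dots> \<le> qsem (qmaxify F0) a v" using QMin F0 by (auto simp: list_all_iff)
  also have "\<dots> \<le> Max ((\<lambda>F. qsem F a v) ` set (map qmaxify Fs))" using F0 by simp
  finally show ?case by simp
next
  case (QMax Fs)
  then have ne: "Fs \<noteq> []" by simp
  show ?case using QMax ne
    by (auto simp: list_all_iff intro!: Max.boundedI)
       (meson Max_ge dual_order.trans finite_imageI finite_set imageI)
qed auto

lemma qsem_sub: "qwf F \<Longrightarrow> qsem F (\<lambda>x. a x + d x) v \<le> qsem F a v + qsem (qD (qmaxify F)) d v"
proof (induction F arbitrary: v)
  case (QScale t F)
  have "qsem F (\<lambda>x. a x + d x) v \<le> qsem F a v + qsem (qD (qmaxify F)) d v" using QScale.prems by (intro QScale.IH) simp
  then have "t v * qsem F (\<lambda>x. a x + d x) v \<le> t v * (qsem F a v + qsem (qD (qmaxify F)) d v)"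
    by (rule mult_left_mono) simp
  then show ?case by (simp only: qsem.simps qmaxify.simps qD.simps distrib_left)
next
  case (QPlus F G)
  have "qsem F (\<lambda>x. a x + d x) v + qsem G (\<lambda>x. a x + d x) v \<le> (qsem F a v + qsem (qD (qmaxify F)) d v) + (qsem G a v + qsem (qD (qmaxify G)) d v)"
    using QPlus.prems by (intro add_mono QPlus.IH) simp_all
  then show ?case by (simp only: qsem.simps qmaxify.simps qD.simps ac_simps)
next
  case (QMin Fs)
  then have ne: "Fs \<noteq> []" and wf: "\<And>F. F \<in> set Fs \<Longrightarrow> qwf F" by (auto simp: list_all_iff)
  obtain F0 where F0: "F0 \<in> set Fs" "qsem F0 a v = Min ((\<lambda>F. qsem F a v) ` set Fs)"
  proof -
    have "Min ((\<lambda>F. qsem F a v) ` set Fs) \<in> (\<lambda>F. qsem F a v) ` set Fs" by (rule Min_in) (use ne in auto)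
    then show ?thesis using that by auto
  qed
  have h1: "Min ((\<lambda>F. qsem F (\<lambda>x. a x + d x) v) ` set Fs) \<le> qsem F0 (\<lambda>x. a x + d x) v"
    by (intro Min_le finite_imageI finite_set imageI F0(1))
  have h2: "qsem F0 (\<lambda>x. a x + d x) v \<le> qsem F0 a v + qsem (qD (qmaxify F0)) d v" by (rule QMin.IH[OF F0(1) wf[OF F0(1)]])
  have h3: "qsem (qD (qmaxify F0)) d v \<le> Max ((\<lambda>F. qsem F d v) ` set (map qD (map qmaxify Fs)))"
  proof (intro Max_ge finite_imageI finite_set imageI)
    show "qD (qmaxify F0) \<in> set (map qD (map qmaxify Fs))" using F0(1) by (simp only: set_map image_eqI)
  qed
  have "Min ((\<lambda>F. qsem F (\<lambda>x. a x + d x) v) ` set Fs) \<le> Min ((\<lambda>F. qsem F a v) ` set Fs) + Max ((\<lambda>F. qsem F d v) ` set (map qD (map qmaxify Fs)))"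
  proof -
    have "qsem F0 a v + qsem (qD (qmaxify F0)) d v \<le> qsem F0 a v + Max ((\<lambda>F. qsem F d v) ` set (map qD (map qmaxify Fs)))"
      using h3 by (rule add_left_mono)
    then show ?thesis using order_trans[OF h1 h2] unfolding F0(2) by (rule order_trans[rotated])
  qed
  then show ?case by (simp only: qsem_QMin' qsem_QMax' qmaxify.simps qD.simps)
next
  case (QMax Fs)
  then have ne: "Fs \<noteq> []" and wf: "\<And>F. F \<in> set Fs \<Longrightarrow> qwf F" by (auto simp: list_all_iff)
  obtain F0 where F0: "F0 \<in> set Fs" "qsem F0 (\<lambda>x. a x + d x) v = Max ((\<lambda>F. qsem F (\<lambda>x. a x + d x) v) ` set Fs)"
  proof -
    have "Max ((\<lambda>F. qsem F (\<lambda>x. a x + d x) v) ` set Fs) \<in> (\<lambda>F. qsem F (\<lambda>x. a x + d x) v) ` set Fs" by (rule Max_in) (use ne in auto)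
    then show ?thesis using that by auto
  qed
  have h2: "qsem F0 (\<lambda>x. a x + d x) v \<le> qsem F0 a v + qsem (qD (qmaxify F0)) d v" by (rule QMax.IH[OF F0(1) wf[OF F0(1)]])
  have h1: "qsem F0 a v \<le> Max ((\<lambda>F. qsem F a v) ` set Fs)"
    by (intro Max_ge finite_imageI finite_set imageI F0(1))
  have h3: "qsem (qD (qmaxify F0)) d v \<le> Max ((\<lambda>F. qsem F d v) ` set (map qD (map qmaxify Fs)))"
  proof (intro Max_ge finite_imageI finite_set imageI)
    show "qD (qmaxify F0) \<in> set (map qD (map qmaxify Fs))" using F0(1) by (simp only: set_map image_eqI)
  qed
  have "Max ((\<lambda>F. qsem F (\<lambda>x. a x + d x) v) ` set Fs) \<le> Max ((\<lambda>F. qsem F a v) ` set Fs) + Max ((\<lambda>F. qsem F d v) ` set (map qD (map qmaxify Fs)))"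
  proof -
    have "qsem F0 a v + qsem (qD (qmaxify F0)) d v \<le> Max ((\<lambda>F. qsem F a v) ` set Fs) + Max ((\<lambda>F. qsem F d v) ` set (map qD (map qmaxify Fs)))"
      using h1 h3 by (rule add_mono)
    then show ?thesis using h2 unfolding F0(2)[symmetric] by (rule order_trans[rotated])
  qed
  then show ?case by (simp only: qsem_QMax' qmaxify.simps qD.simps)
next
  case (QVar x) then show ?case by simp
next
  case (QConst x) then show ?case by simp
next
  case (QIte b F G)
  then have "qwf F" "qwf G" by simp_all
  then show ?case using QIte.IH[of v] by (cases "b v") (simp_all only: qD.simps qmaxify.simps qsem.simps if_True if_False)
qed

lemma qsem_hom: "qwf G \<Longrightarrow> c * qsem (qD G) r v \<le> qsem (qD G) (\<lambda>x. c * r x) v"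
proof (induction G arbitrary: v)
  case (QScale t F)
  have "qwf F" using QScale.prems by simp
  then have "c * qsem (qD F) r v \<le> qsem (qD F) (\<lambda>x. c * r x) v" by (rule QScale.IH)
  then have "t v * (c * qsem (qD F) r v) \<le> t v * qsem (qD F) (\<lambda>x. c * r x) v"
    by (rule mult_left_mono) simp
  moreover have "c * (t v * qsem (qD F) r v) = t v * (c * qsem (qD F) r v)" by (rule mult.left_commute)
  ultimately show ?case by (simp only: qD.simps qsem.simps)
next
  case (QPlus F G)
  have "c * qsem (qD F) r v + c * qsem (qD G) r v \<le> qsem (qD F) (\<lambda>x. c * r x) v + qsem (qD G) (\<lambda>x. c * r x) v"
  proof (intro add_mono)
    have "qwf F" "qwf G" using QPlus.prems by simp_all
    show "c * qsem (qD F) r v \<le> qsem (qD F) (\<lambda>x. c * r x) v" by (rule QPlus.IH(1)) fact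
    show "c * qsem (qD G) r v \<le> qsem (qD G) (\<lambda>x. c * r x) v" by (rule QPlus.IH(2)) fact
  qed
  moreover have "c * (qsem (qD F) r v + qsem (qD G) r v) = c * qsem (qD F) r v + c * qsem (qD G) r v" by (rule distrib_left)
  ultimately show ?case by (simp only: qD.simps qsem.simps)
next
  case (QMin Fs)
  then have ne: "Fs \<noteq> []" and wf: "\<And>F. F \<in> set Fs \<Longrightarrow> qwf F" by (auto simp: list_all_iff)
  show ?case
  proof (simp only: qD.simps qsem_QMin', intro Min.boundedI)
    show "finite ((\<lambda>F. qsem F (\<lambda>x. c * r x) v) ` set (map qD Fs))" by simp
    show "(\<lambda>F. qsem F (\<lambda>x. c * r x) v) ` set (map qD Fs) \<noteq> {}" using ne by simp
    fix y assume "y \<in> (\<lambda>F. qsem F (\<lambda>x. c * r x) v) ` set (map qD Fs)"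
    then obtain F0 where F0: "F0 \<in> set Fs" "y = qsem (qD F0) (\<lambda>x. c * r x) v" by auto
    have "c * Min ((\<lambda>F. qsem F r v) ` set (map qD Fs)) \<le> c * qsem (qD F0) r v"
      using F0 by (simp add: mult_left_mono)
    also have "\<dots> \<le> y" unfolding F0(2) by (rule QMin.IH[OF F0(1) wf[OF F0(1)]])
    finally show "c * Min ((\<lambda>F. qsem F r v) ` set (map qD Fs)) \<le> y" .
  qed
next
  case (QMax Fs)
  then have ne: "Fs \<noteq> []" and wf: "\<And>F. F \<in> set Fs \<Longrightarrow> qwf F" by (auto simp: list_all_iff)
  obtain G0 where G0: "G0 \<in> set (map qD Fs)" "qsem G0 r v = Max ((\<lambda>F. qsem F r v) ` set (map qD Fs))"
  proof -
    have "Max ((\<lambda>F. qsem F r v) ` set (map qD Fs)) \<in> (\<lambda>F. qsem F r v) ` set (map qD Fs)" by (rule Max_in) (use ne in auto)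
    then obtain G where "G \<in> set (map qD Fs)" "Max ((\<lambda>F. qsem F r v) ` set (map qD Fs)) = qsem G r v" by (rule imageE)
    then show ?thesis by (metis that)
  qed
  then obtain F0 where F0: "F0 \<in> set Fs" "G0 = qD F0" by auto
  have "c * qsem (qD F0) r v \<le> qsem (qD F0) (\<lambda>x. c * r x) v" by (rule QMax.IH[OF F0(1) wf[OF F0(1)]])
  also have "\<dots> \<le> Max ((\<lambda>F. qsem F (\<lambda>x. c * r x) v) ` set (map qD Fs))" using F0 by simp
  finally show ?case using G0 F0 by simp
next
  case (QVar x) then show ?case by simp
next
  case (QConst x) then show ?case by simp
next
  case (QIte b F G)
  then have "qwf F" "qwf G" by simp_all
  then show ?case using QIte.IH[of v] by (cases "b v") (simp_all only: qD.simps qsem.simps if_True if_False)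
qed

lemma finite_zero:
  fixes x y :: ennreal
  assumes "y < \<infinity>" "\<And>n. of_nat (Suc n) * x \<le> y"
  shows "x = 0"
proof (rule ccontr)
  assume "x \<noteq> 0"
  have xf: "x < \<infinity>" using assms(2)[of 0] assms(1) by simp
  obtain a where a: "x = ennreal a" "a \<ge> 0" using xf by (cases x) auto
  obtain b where b: "y = ennreal b" "b \<ge> 0" using assms(1) by (cases y) auto
  have "a > 0" using a \<open>x \<noteq> 0\<close> by auto
  then obtain n where n: "b < real n * a" using ex_less_of_nat_mult by blast
  have "ennreal (real (Suc n) * a) \<le> ennreal b"
    using assms(2)[of n] a b by (simp add: ennreal_mult ennreal_of_nat_eq_real_of_nat)
  then have "real (Suc n) * a \<le> b" using b by (simp add: ennreal_le_iff)
  moreover have "real n * a \<le> real (Suc n) * a" using a by (simp add: mult_right_mono)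
  ultimately show False using n by linarith
qed

theorem theoremE4:
  fixes F :: "'d qform" and u r \<eta> :: "'d \<Rightarrow> ennreal"
  assumes "qwf F"
    and "qsem (qmaxify F) u \<le> u"
    and "\<forall>v. r v < \<infinity>"
    and "qsem (qD (qmaxify F)) r + u \<le> r"
    and "\<eta> \<le> u"
    and "\<eta> \<le> qsem F \<eta>"
  shows "\<eta> \<le> lfp (qsem F)"
proof -
  define \<Phi> where "\<Phi> = qsem F"
  define L where "L = qsem (qD (qmaxify F))"
  have wfm: "qwf (qmaxify F)" using assms(1) by (rule qwf_qmaxify)
  have mono: "mono \<Phi>" unfolding \<Phi>_def by (rule monoI, rule le_funI, erule qsem_mono)
  define \<mu> where "\<mu> = lfp \<Phi>"
  have fix\<mu>: "\<Phi> \<mu> = \<mu>" unfolding \<mu>_def by (rule lfp_unfold[OF mono, symmetric])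
  have "\<Phi> u \<le> u" unfolding \<Phi>_def
    by (rule le_funI, rule order_trans[OF qsem_le_max[OF assms(1)] le_funD[OF assms(2)]])
  then have \<mu>u: "\<mu> \<le> u" unfolding \<mu>_def by (rule lfp_lowerbound)
  have Lru: "L r v + u v \<le> r v" for v
    using le_funD[OF assms(4), of v] unfolding L_def plus_fun_def .
  have ur: "u v \<le> r v" for v
    using Lru[of v] by (rule order_trans[rotated]) (rule add_increasing, rule zero_le, rule order_refl)
  define \<nu> where "\<nu> = sup \<eta> \<mu>"
  have \<nu>u: "\<nu> \<le> u" unfolding \<nu>_def by (rule sup_least[OF assms(5) \<mu>u])
  have \<nu>post: "\<nu> \<le> \<Phi> \<nu>"
  proof -
    have "\<eta> \<le> \<Phi> \<eta>" using assms(6) unfolding \<Phi>_def .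
    also have "\<dots> \<le> \<Phi> \<nu>" unfolding \<nu>_def by (rule monoD[OF mono sup_ge1])
    finally have A: "\<eta> \<le> \<Phi> \<nu>" .
    have "\<mu> = \<Phi> \<mu>" using fix\<mu> by (rule sym)
    also have "\<dots> \<le> \<Phi> \<nu>" unfolding \<nu>_def by (rule monoD[OF mono sup_ge2])
    finally have B: "\<mu> \<le> \<Phi> \<nu>" .
    show ?thesis using A B unfolding \<nu>_def by (rule sup_least)
  qed
  define d where "d = (\<lambda>v. \<nu> v - \<mu> v)"
  have \<mu>\<nu>: "\<mu> \<le> \<nu>" unfolding \<nu>_def by (rule sup_ge2)
  have \<nu>eq: "\<nu> v = \<mu> v + d v" for v
    using le_funD[OF \<mu>\<nu>, of v] unfolding d_def by (simp add: add_diff_self_ennreal)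
  have \<nu>eq': "\<nu> = (\<lambda>x. \<mu> x + d x)" using \<nu>eq by (rule ext)
  have fin\<mu>: "\<mu> v < \<infinity>" for v
    using order_trans[OF le_funD[OF \<mu>u] ur] assms(3) by (meson order.strict_trans1)
  have dL: "d v \<le> L d v" for v
  proof -
    have "\<mu> v + d v = \<nu> v" by (rule \<nu>eq[symmetric])
    also have "\<dots> \<le> \<Phi> \<nu> v" by (rule le_funD[OF \<nu>post])
    also have "\<dots> = \<Phi> (\<lambda>x. \<mu> x + d x) v" unfolding \<nu>eq' ..
    also have "\<dots> \<le> \<Phi> \<mu> v + L d v" unfolding \<Phi>_def L_def by (rule qsem_sub[OF assms(1)])
    also have "\<dots> = \<mu> v + L d v" unfolding fix\<mu> ..
    finally have "\<mu> v + d v \<le> \<mu> v + L d v" .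
    moreover have "\<mu> v \<noteq> \<infinity>" using fin\<mu>[of v] by simp
    ultimately show ?thesis by (simp add: ennreal_add_left_cancel_le)
  qed
  have du: "d v \<le> u v" for v
    using order_trans[OF diff_le_self_ennreal le_funD[OF \<nu>u]] unfolding d_def .
  have step: "of_nat (Suc n) * d v \<le> r v" for n v
  proof (induction n arbitrary: v)
    case 0
    have "d v \<le> r v" by (rule order_trans[OF du ur])
    then show ?case by simp
  next
    case (Suc n)
    have "of_nat (Suc n) * d v \<le> of_nat (Suc n) * L d v" by (rule mult_left_mono[OF dL]) simp
    also have "\<dots> \<le> L (\<lambda>x. of_nat (Suc n) * d x) v" unfolding L_def
      by (rule qsem_hom[OF wfm])
    also have "\<dots> \<le> L r v" unfolding L_def
      by (rule qsem_mono, rule le_funI, rule Suc.IH)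
    finally have A: "of_nat (Suc n) * d v \<le> L r v" .
    have "of_nat (Suc n) * d v + d v \<le> L r v + u v" by (rule add_mono[OF A du])
    also have "\<dots> \<le> r v" by (rule Lru)
    finally have B: "of_nat (Suc n) * d v + d v \<le> r v" .
    have "(of_nat (Suc (Suc n)) :: ennreal) * d v = of_nat (Suc n) * d v + d v"
      by (simp only: of_nat_Suc[of "Suc n"] distrib_right mult_1 add.commute)
    then show ?case using B by simp
  qed
  have d0: "d v = 0" for v by (rule finite_zero[OF _ step]) (use assms(3) in blast)
  have "\<nu> = \<mu>" unfolding \<nu>eq' d0 by simp
  then have "\<eta> \<le> \<mu>" unfolding \<nu>_def by (metis sup.orderI sup_commute)
  then show ?thesis unfolding \<mu>_def \<Phi>_def .
qed

end
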